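(* Let $p\ge 2$, $d\in\{0,\dots,9\}$ and $n\ge 10^{p-1}$ be integers, and let $k=\max\{i\in\mathbb N:10^{i+p}\le n\}$ (with $k=-1$ if this set is empty). Then $$P_{(d,n,p)}=\frac{1}{n+1-10^{p-1}}\Big(P_{(d,10^{k+p}-1,p)}\times(10^{k+p}-10^{p-1})+r_{(n,d,p)}\Big),$$ where, when $k=-1$, the product $P_{(d,10^{k+p}-1,p)}\times(10^{k+p}-10^{p-1})$ is taken to be $0$, and where, with $l=\big\lfloor\frac{n-(10^{p-1}+d)10^{k+1}}{10^{k+2}}\big\rfloor+10^{p-2}$: if the $p$-th digit of $n$ is $d$, \begin{align*} r_{(n,d,p)}=&\sum_{j=10^{p-2}}^{l}\ \sum_{b=(10j+d)10^{k+1}}^{\min(n,(10j+(d+1))10^{k+1}-1)}\frac{b-((9j+d)10^{k+1}+10^{p-2}-1)}{b+1-10^{p-1}}\\ &+\sum_{j=10^{p-2}-1}^{l-1}\ \sum_{a=\max(10^{p+k},(10j+(d+1))10^{k+1})}^{(10(j+1)+d)10^{k+1}-1}\frac{10^{k+1}(j+1)-10^{p-2}}{a+1-10^{p-1}}, \end{align*} and if the $p$-th digit of $n$ is different from $d$, \begin{align*} r_{(n,d,p)}=&\sum_{j=10^{p-2}}^{l}\ \sum_{b=(10j+d)10^{k+1}}^{(10j+(d+1))10^{k+1}-1}\frac{b-((9j+d)10^{k+1}+10^{p-2}-1)}{b+1-10^{p-1}}\\ &+\sum_{j=10^{p-2}-1}^{l}\ \sum_{a=\max(10^{p+k},(10j+(d+1))10^{k+1})}^{\min(n,(10(j+1)+d)10^{k+1}-1)}\frac{10^{k+1}(j+1)-10^{p-2}}{a+1-10^{p-1}}.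 \end{align*}
   Context: For an integer $x\ge 10^{p-1}$, the "$p$-th digit of $x$" is the $p$-th digit of its decimal expansion counted from the left. For $d\in\{0,\dots,9\}$ and $m\ge 10^{p-1}$, let $N_d(m)$ be the number of integers $x$ with $10^{p-1}\le x\le m$ whose $p$-th digit is $d$. For $N\ge 10^{p-1}$, $$P_{(d,N,p)}=\frac{1}{N+1-10^{p-1}}\sum_{m=10^{p-1}}^{N}\frac{N_d(m)}{m+1-10^{p-1}},$$ the probability that the $p$-th digit of $x$ is $d$ when $m$ is chosen uniformly in $\{10^{p-1},\dots,N\}$ and then $x$ uniformly in $\{10^{p-1},\dots,m\}$. Empty sums are zero. *)

theory Defs
  imports Complex_Main
begin

definition num_digits :: "nat \<Rightarrow> nat" where
  "num_digits x = (LEAST i. x < 10 ^ i)"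

text \<open>The p-th decimal digit of x counted from the left (meaningful for x \<ge> 10^(p-1)).\<close>
definition pth_digit :: "nat \<Rightarrow> nat \<Rightarrow> nat" where
  "pth_digit p x = (x div 10 ^ (num_digits x - p)) mod 10"

definition Ncount :: "nat \<Rightarrow> nat \<Rightarrow> nat \<Rightarrow> nat" where
  "Ncount p d m = card {x. 10 ^ (p - 1) \<le> x \<and> x \<le> m \<and> pth_digit p x = d}"

definition Pprob :: "nat \<Rightarrow> nat \<Rightarrow> nat \<Rightarrow> real" where
  "Pprob d N p = (1 / (real N + 1 - 10 ^ (p - 1))) *
     (\<Sum>m\<in>{10 ^ (p - 1)..N}. real (Ncount p d m) / (real m + 1 - 10 ^ (p - 1)))"

end

theory Submission
  imports Defs
begin


definition Phi :: "nat \<Rightarrow> nat \<Rightarrow> nat \<Rightarrow> nat" where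
  "Phi D d y = (y div D div 10) * D +
     (if d < y div D mod 10 then D else if y div D mod 10 = d then y mod D + 1 else 0)"

lemma Phi_Suc: assumes "0 < D" "d \<le> 9"
  shows "Phi D d (Suc y) = Phi D d y + (if Suc y div D mod 10 = d then 1 else 0)"
proof (cases "Suc (y mod D) = D")
  case True
  then have q: "Suc y div D = Suc (y div D)" and t: "Suc y mod D = 0"
    using div_Suc mod_Suc by auto
  show ?thesis
  proof (cases "Suc (y div D mod 10) = 10")
    case True
    then have "Suc (y div D) div 10 = Suc (y div D div 10)" "Suc (y div D) mod 10 = 0"
      using div_Suc mod_Suc by auto
    then show ?thesis unfolding Phi_def q t using True \<open>Suc (y mod D) = D\<close> assms by auto
  next
    case False
    then have "Suc (y div D) div 10 = y div D div 10" "Suc (y div D) mod 10 = Suc (y div D mod 10)"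
      using div_Suc mod_Suc by auto
    then show ?thesis unfolding Phi_def q t using False \<open>Suc (y mod D) = D\<close> assms by auto
  qed
next
  case False
  then have q: "Suc y div D = y div D" and t: "Suc y mod D = Suc (y mod D)"
    using div_Suc mod_Suc by auto
  have "y mod D < D" using assms by simp
  then show ?thesis unfolding Phi_def q t using False by auto
qed

lemma cnt_Phi: assumes "0 < D" "d \<le> 9"
  shows "card {x. x \<le> y \<and> x div D mod 10 = d} = Phi D d y"
proof (induction y)
  case 0
  have "{x. x \<le> (0::nat) \<and> x div D mod 10 = d} = (if d = 0 then {0} else {})" by auto
  then show ?case using assms unfolding Phi_def by auto
next
  case (Suc y)
  have e: "{x. x \<le> Suc y \<and> x div D mod 10 = d} = {x. x \<le> y \<and> x div D mod 10 = d} \<union>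
     (if Suc y div D mod 10 = d then {Suc y} else {})" by (auto simp: le_Suc_eq)
  have f: "finite {x. x \<le> y \<and> x div D mod 10 = d}" by simp
  show ?case unfolding e Phi_Suc[OF assms] Suc[symmetric]
    using f by (auto simp: card_Un_disjoint)
qed

lemma num_digits_eq: assumes "1 \<le> i" "10^(i-1) \<le> x" "x < 10^i" shows "num_digits x = i"
  unfolding num_digits_def
proof (rule Least_equality)
  show "x < 10^i" by fact
  fix y assume "x < 10^y"
  show "i \<le> y"
  proof (rule ccontr)
    assume "\<not> i \<le> y"
    then have "(10::nat)^y \<le> 10^(i-1)" by (intro power_increasing) auto
    then show False using assms \<open>x < 10^y\<close> by linarith
  qed
qed

lemma pth_digit_eq: assumes "1 \<le> p" "10^(p-1+s) \<le> x" "x < 10^(p+s)"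
  shows "pth_digit p x = x div 10^s mod 10"
proof -
  have "num_digits x = p + s" using num_digits_eq[of "p+s" x] assms by auto
  then show ?thesis unfolding pth_digit_def by simp
qed

lemma Phi_top: assumes "1 \<le> T" "0 < D" "d \<le> 9" shows "Phi D d (10*T*D - 1) = T*D"
proof -
  have e: "10*T*D - 1 = (D - 1) + (10*T - 1) * D" using assms
    by (simp add: algebra_simps diff_mult_distrib)
  have dd: "(D - 1) div D = 0" "(D - 1) mod D = D - 1" using assms by auto
  have q: "(10*T*D - 1) div D = 10*T - 1" unfolding e using assms dd
    by (simp only: div_mult_self1)
  have t: "(10*T*D - 1) mod D = D - 1" unfolding e using assms dd
    by (simp only: mod_mult_self1)
  have e2: "10*T - 1 = 9 + (T - 1) * 10" using assms by simp
  have q2: "(10*T - 1) div 10 = T - 1" "(10*T - 1) mod 10 = 9" unfolding e2 by simp_all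
  have i: "(if d < 9 then D else if 9 = d then D - 1 + 1 else 0) = D" using assms by auto
  have "Phi D d (10*T*D - 1) = (T - 1) * D + D" unfolding Phi_def q t q2 i by simp
  also have "\<dots> = T * D" using assms by (cases T) auto
  finally show ?thesis .
qed

lemma Ncount_split:
  assumes "1 \<le> a" "10^(p-1) \<le> a" "a \<le> m" "\<And>x. a \<le> x \<Longrightarrow> x \<le> m \<Longrightarrow> pth_digit p x = x div D mod 10"
    "0 < D" "d \<le> 9"
  shows "Ncount p d m + Phi D d (a-1) = Ncount p d (a-1) + Phi D d m"
proof -
  let ?A = "{x. 10^(p-1) \<le> x \<and> x \<le> a - 1 \<and> pth_digit p x = d}"
  let ?B = "{x. a \<le> x \<and> x \<le> m \<and> x div D mod 10 = d}"
  let ?C = "{x. x \<le> a - 1 \<and> x div D mod 10 = d}"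
  have e1: "{x. 10^(p-1) \<le> x \<and> x \<le> m \<and> pth_digit p x = d} = ?A \<union> ?B"
  proof (intro set_eqI)
    fix x show "(x \<in> {x. 10^(p-1) \<le> x \<and> x \<le> m \<and> pth_digit p x = d}) = (x \<in> ?A \<union> ?B)"
      using assms(1-3) assms(4)[of x] by (cases "x < a") auto
  qed
  have e2: "{x. x \<le> m \<and> x div D mod 10 = d} = ?C \<union> ?B" using assms by auto
  have fA: "finite ?A" by (rule finite_subset[of _ "{..a-1}"]) auto
  have fB: "finite ?B" by (rule finite_subset[of _ "{..m}"]) auto
  have fC: "finite ?C" by (rule finite_subset[of _ "{..a-1}"]) auto
  have c1: "Ncount p d m = card ?A + card ?B" unfolding Ncount_def e1
    using fA fB assms(1) by (subst card_Un_disjoint) auto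
  have c2: "Phi D d m = card ?C + card ?B" unfolding cnt_Phi[OF assms(5,6), symmetric] e2
    using fC fB assms(1) by (subst card_Un_disjoint) auto
  have c3: "Phi D d (a-1) = card ?C" using cnt_Phi[OF assms(5,6)] by simp
  have c4: "Ncount p d (a-1) = card ?A" unfolding Ncount_def by simp
  show ?thesis using c1 c2 c3 c4 by simp
qed

lemma T_facts: assumes "2 \<le> p" shows "(10::nat)^(p-1) = 10 * 10^(p-2)" "(10::nat)^p = 10*10*10^(p-2)"
  "1 \<le> (10::nat)^(p-2)"
proof -
  have a: "p - 1 = Suc (p-2)" "p = Suc (Suc (p-2))" using assms by auto
  have "(10::nat)^(p-1) = 10^(Suc (p-2))" using a(1) by (rule arg_cong)
  then show "(10::nat)^(p-1) = 10 * 10^(p-2)" by simp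
  have "(10::nat)^p = 10^(Suc (Suc (p-2)))" using a(2) by (rule arg_cong)
  then show "(10::nat)^p = 10*10*10^(p-2)" by simp
  show "1 \<le> (10::nat)^(p-2)" by simp
qed

lemma Ncount_step:
  assumes "2 \<le> p" "d \<le> 9" and A: "Ncount p d (10^(p-1)*10^e - 1) + 10^(p-2) = 10^(p-2)*10^e"
    and m: "10^(p-1)*10^e \<le> m" "m < 10^p*10^e"
  shows "Ncount p d m + 10^(p-2) = Phi (10^e) d m"
proof -
  define T :: nat where "T = 10^(p-2)"
  define D :: nat where "D = 10^e"
  have L: "(10::nat)^(p-1) = 10*T" "(10::nat)^p = 10*10*T" "1 \<le> T" using T_facts[OF assms(1)] T_def by auto
  have D: "0 < D" "1 \<le> D" unfolding D_def by auto
  have TD: "1 \<le> 10*T*D" "T \<le> T*D" using L D by auto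
  have pd: "pth_digit p x = x div D mod 10" if "10*T*D \<le> x" "x \<le> m" for x
    unfolding D_def
  proof (rule pth_digit_eq)
    show "1 \<le> p" using assms by simp
    show "10 ^ (p - 1 + e) \<le> x" using that L unfolding D_def by (simp add: power_add)
    show "x < 10 ^ (p + e)" using that m L unfolding D_def by (simp add: power_add)
  qed
  have sp: "Ncount p d m + Phi D d (10*T*D-1) = Ncount p d (10*T*D-1) + Phi D d m"
    apply (rule Ncount_split[OF TD(1) _ _ pd D(1) assms(2)])
    using L m D_def by auto
  have pt: "Phi D d (10*T*D-1) = T*D" using Phi_top L D assms by auto
  have A': "Ncount p d (10*T*D - 1) + T = T*D" using A L unfolding T_def D_def by simp
  show ?thesis using sp pt A' TD unfolding T_def[symmetric] D_def[symmetric] by linarith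
qed

lemma Ncount_bottom:
  assumes "2 \<le> p" "d \<le> 9"
  shows "Ncount p d (10^(p-1)*10^e - 1) + 10^(p-2) = 10^(p-2)*10^e"
proof (induction e)
  case 0
  have "(1::nat) \<le> 10^(p-1)" by simp
  have "{x. 10^(p-1) \<le> x \<and> x \<le> 10^(p-1) - 1 \<and> pth_digit p x = d} = {}"
  proof (rule ccontr)
    assume "{x. 10^(p-1) \<le> x \<and> x \<le> 10^(p-1) - 1 \<and> pth_digit p x = d} \<noteq> {}"
    then obtain x :: nat where "10^(p-1) \<le> x" "x \<le> 10^(p-1) - 1" by blast
    then show False using \<open>(1::nat) \<le> 10^(p-1)\<close> by linarith
  qed
  then have "Ncount p d (10^(p-1) - 1) = 0" unfolding Ncount_def by simp
  then show ?case by simp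
next
  case (Suc e)
  have L: "(10::nat)^(p-1) = 10*10^(p-2)" "(10::nat)^p = 10*10*10^(p-2)" using T_facts[OF assms(1)] by auto
  have h: "Ncount p d (10^(p-1)*10^(Suc e) - 1) + 10^(p-2) = Phi (10^e) d (10^(p-1)*10^(Suc e) - 1)"
    apply (rule Ncount_step[OF assms Suc])
    unfolding L by (auto simp: mult.assoc)
  have "(10::nat)^(p-1)*10^(Suc e) = 10*(10^(p-1))*10^e" by simp
  then have "Phi (10^e) d (10^(p-1)*10^(Suc e) - 1) = Phi (10^e) d (10*(10^(p-1))*10^e - 1)"
    by (metis (no_types))
  also have "\<dots> = 10^(p-1) * 10^e" by (rule Phi_top) (use assms in auto)
  also have "\<dots> = 10^(p-2)*10^(Suc e)" unfolding L by simp
  finally show ?case using h by simp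
qed

lemma Ncount_formula:
  assumes "2 \<le> p" "d \<le> 9" "10^(p-1)*10^e \<le> m" "m < 10^p*10^e"
  shows "Ncount p d m + 10^(p-2) = Phi (10^e) d m"
  using Ncount_step[OF assms(1,2) Ncount_bottom[OF assms(1,2)] assms(3,4)] .



lemma div_ge_iff: fixes m a D :: int assumes "0 < D" shows "(a \<le> m div D) = (a * D \<le> m)"
proof
  assume "a \<le> m div D"
  then have "a * D \<le> (m div D) * D" using assms by (simp add: mult_right_mono)
  also have "\<dots> \<le> m" using assms by (metis minus_div_mult_eq_mod pos_mod_sign diff_ge_0_iff_ge)
  finally show "a * D \<le> m" .
next
  assume h: "a * D \<le> m"
  have "m < (m div D + 1) * D" using assms
    by (metis distrib_right mult_1 pos_mod_bound div_mult_mod_eq add_less_cancel_left)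
  with h have "a * D < (m div D + 1) * D" by linarith
  then show "a \<le> m div D" using assms by (simp add: mult_less_cancel_right)
qed

lemma div_lt_iff: fixes m b D :: int assumes "0 < D" shows "(m div D < b) = (m < b * D)"
  using div_ge_iff[OF assms, of b m] by linarith

lemma Phi_int: "int (Phi D d x) = (int x div int D div 10) * int D + (if int d < int x div int D mod 10 then int D
   else if int x div int D mod 10 = int d then int x mod int D + 1 else 0)"
proof -
  have a: "int x div int D div 10 = int (x div D div 10)" "int x div int D mod 10 = int (x div D mod 10)"
    "int x mod int D = int (x mod D)" by (simp_all add: zdiv_int zmod_int)
  show ?thesis unfolding a Phi_def by simp
qed

lemma ten_lt: "(10::int) * a < 10 * b \<Longrightarrow> a < b" by simp
lemma dec10: fixes q :: int shows "q = 10 * (q div 10) + q mod 10" "0 \<le> q mod 10" "q mod 10 < 10" by auto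
lemma dm10: fixes q j d :: int assumes "0 \<le> d" "d \<le> 9" "q = 10*j + d" shows "q div 10 = j" "q mod 10 = d"
proof -
  have "j \<le> q div 10" using div_ge_iff[of 10 j q] assms by simp
  moreover have "q div 10 < j + 1" using div_lt_iff[of 10 q "j+1"] assms by simp
  ultimately show "q div 10 = j" by simp
  then show "q mod 10 = d" using dec10(1)[of q] assms by simp
qed
lemma div10_eq: fixes u j :: int assumes "10*j \<le> u" "u < 10*j + 10" shows "u div 10 = j"
proof -
  have "j \<le> u div 10" using div_ge_iff[of 10 j u] assms by (simp add: mult.commute)
  moreover have "u div 10 < j + 1" using div_lt_iff[of 10 u "j+1"] assms by (simp add: algebra_simps)
  ultimately show ?thesis by simp
qed

lemma t2: fixes q j d w c :: int shows "10*j + (d+1) \<le> q \<Longrightarrow> q < 10*(j+1) + d \<Longrightarrow> q = 10*w + c \<Longrightarrow> 0 \<le> c \<Longrightarrow> c < 10 \<Longrightarrow> 0 \<le> d \<Longrightarrow> d \<le> 9 \<Longrightarrow> c \<noteq> d"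
proof
  assume h: "10*j + (d+1) \<le> q" "q < 10*(j+1) + d" "q = 10*w + c" "c = d"
  have "10*j < 10*w" using h by linarith
  then have a: "j < w" by (rule ten_lt)
  have "10*w < 10*(j + 1)" using h by linarith
  then have b: "w < j + 1" by (rule ten_lt)
  show False using a b by simp
qed
lemma t4: fixes q j d w c :: int shows "10*j + (d+1) \<le> q \<Longrightarrow> q < 10*(j+1) + d \<Longrightarrow> q = 10*w + c \<Longrightarrow> 0 \<le> c \<Longrightarrow> c < 10 \<Longrightarrow> 0 \<le> d \<Longrightarrow> d \<le> 9 \<Longrightarrow> d < c \<Longrightarrow> w = j"
proof -
  assume h: "10*j + (d+1) \<le> q" "q < 10*(j+1) + d" "q = 10*w + c" "0 \<le> c" "c < 10" "0 \<le> d" "d \<le> 9" "d < c"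
  have "10*(j - 1) < 10*w" using h unfolding right_diff_distrib by linarith
  then have a: "j - 1 < w" by (rule ten_lt)
  have "10*w < 10*(j + 1)" using h by linarith
  then have b: "w < j + 1" by (rule ten_lt)
  show "w = j" using a b by simp
qed
lemma t5: fixes q j d w c :: int shows "10*j + (d+1) \<le> q \<Longrightarrow> q < 10*(j+1) + d \<Longrightarrow> q = 10*w + c \<Longrightarrow> 0 \<le> c \<Longrightarrow> c < 10 \<Longrightarrow> 0 \<le> d \<Longrightarrow> d \<le> 9 \<Longrightarrow> c < d \<Longrightarrow> w = j + 1"
proof -
  assume h: "10*j + (d+1) \<le> q" "q < 10*(j+1) + d" "q = 10*w + c" "0 \<le> c" "c < 10" "0 \<le> d" "d \<le> 9" "c < d"
  have "10*j < 10*w" using h by linarith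
  then have a: "j < w" by (rule ten_lt)
  have "10*w < 10*(j + 2)" using h unfolding distrib_left by linarith
  then have b: "w < j + 2" by (rule ten_lt)
  show "w = j + 1" using a b by simp
qed

lemma regroup:
  fixes h :: "int \<Rightarrow> int \<Rightarrow> real" and g :: "int \<Rightarrow> real"
  assumes "finite J" "\<And>j. j \<in> J \<Longrightarrow> finite (I j)"
    "\<And>j m. j \<in> J \<Longrightarrow> m \<in> I j \<Longrightarrow> m \<in> S \<and> \<pi> m = j \<and> h j m = g m"
    "\<And>m. m \<in> S \<Longrightarrow> \<pi> m \<in> J \<and> m \<in> I (\<pi> m)"
  shows "(\<Sum>j\<in>J. \<Sum>m\<in>I j. h j m) = (\<Sum>m\<in>S. g m)"
proof -
  have "(\<Sum>j\<in>J. \<Sum>m\<in>I j. h j m) = (\<Sum>(j,m)\<in>Sigma J I. h j m)"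
    using assms(1,2) by (simp add: sum.Sigma)
  also have "\<dots> = (\<Sum>m\<in>S. g m)"
    by (rule sum.reindex_bij_witness[of _ "\<lambda>m. (\<pi> m, m)" snd]) (use assms(3,4) in auto)
  finally show ?thesis .
qed

lemma core:
  fixes T D n d l :: int and g :: "int \<Rightarrow> real"
  assumes T1: "1 \<le> T" and D1: "1 \<le> D" and d0: "0 \<le> d" and d9: "d \<le> 9"
    and nlo: "10*T*D \<le> n"
    and ldef: "l = (n - (10*T + d) * D) div (10*D) + T"
    and g: "\<And>m. 10*T*D \<le> m \<Longrightarrow> m \<le> n \<Longrightarrow> g m = real_of_int (m div D div 10 * D +
       (if d < m div D mod 10 then D else if m div D mod 10 = d then m mod D + 1 else 0) - T)
       / real_of_int (m + 1 - 10*T)"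
  shows "(\<Sum>m\<in>{10*T*D..n}. g m) = (if n div D mod 10 = d then
     (\<Sum>j\<in>{T..l}. \<Sum>b\<in>{(10*j + d)*D .. min n ((10*j + (d+1))*D - 1)}.
        real_of_int (b - ((9*j + d)*D + T - 1)) / real_of_int (b + 1 - 10*T))
   + (\<Sum>j\<in>{T - 1..l - 1}. \<Sum>a\<in>{max (10*T*D) ((10*j + (d+1))*D) .. (10*(j+1) + d)*D - 1}.
        real_of_int (D*(j+1) - T) / real_of_int (a + 1 - 10*T))
   else
     (\<Sum>j\<in>{T..l}. \<Sum>b\<in>{(10*j + d)*D .. (10*j + (d+1))*D - 1}.
        real_of_int (b - ((9*j + d)*D + T - 1)) / real_of_int (b + 1 - 10*T))
   + (\<Sum>j\<in>{T - 1..l}. \<Sum>a\<in>{max (10*T*D) ((10*j + (d+1))*D) .. min n ((10*(j+1) + d)*D - 1)}.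
        real_of_int (D*(j+1) - T) / real_of_int (a + 1 - 10*T)))"
proof -
  have D0: "0 < D" using D1 by simp
  define qn where "qn = n div D"
  define z where "z = n - (10*T + d) * D"
  define w where "w = z div (10*D)"
  have D10: "0 < 10*D" using D0 by simp
  have w1: "w * (10*D) \<le> z" using div_ge_iff[OF D10, of w z] w_def by simp
  have w2: "z < (w+1) * (10*D)" using div_lt_iff[OF D10, of z "w+1"] w_def by simp
  have lw: "l = w + T" using ldef z_def w_def by simp
  have e1: "(10*l + d)*D = w * (10*D) + (10*T + d) * D" unfolding lw by (simp add: algebra_simps)
  have e2: "(10*l + d + 10)*D = (w+1) * (10*D) + (10*T + d) * D" unfolding lw by (simp add: algebra_simps)
  have F1: "(10*l + d)*D \<le> n" using e1 w1 z_def by linarith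
  have F2: "n < (10*l + d + 10)*D" using e2 w2 z_def by linarith
  have Q1: "10*l + d \<le> qn" unfolding qn_def using div_ge_iff[OF D0] F1 by blast
  have Q2: "qn < 10*l + d + 10" unfolding qn_def using div_lt_iff[OF D0] F2 by blast
  have Q0: "10*T \<le> qn" unfolding qn_def using div_ge_iff[OF D0] nlo by (simp add: mult.assoc)
  have qmono: "m div D \<le> qn" if "m \<le> n" for m unfolding qn_def using that D0 by (simp add: zdiv_mono1)

  define SB where "SB = {m\<in>{10*T*D..n}. m div D mod 10 = d}"
  define SA where "SA = {m\<in>{10*T*D..n}. m div D mod 10 \<noteq> d}"

  have Bsum: "(\<Sum>j\<in>{T..l}. \<Sum>b\<in>{(10*j + d)*D .. min n ((10*j + (d+1))*D - 1)}.
        real_of_int (b - ((9*j + d)*D + T - 1)) / real_of_int (b + 1 - 10*T)) = (\<Sum>m\<in>SB. g m)"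
  proof (rule regroup[where \<pi> = "\<lambda>m. m div D div 10"])
    fix j b assume j: "j \<in> {T..l}" and b: "b \<in> {(10*j + d)*D .. min n ((10*j + (d+1))*D - 1)}"
    define q where "q = b div D"
    have "10*j + d \<le> q" unfolding q_def using div_ge_iff[OF D0] b by auto
    moreover have "q < 10*j + (d+1)" unfolding q_def using div_lt_iff[OF D0] b by auto
    ultimately have q: "q = 10*j + d" by simp
    have qm: "q mod 10 = d" "q div 10 = j" using dm10[OF d0 d9 q] by auto
    have "10*T \<le> q" using q j d0 by simp
    then have bT: "10*T*D \<le> b" unfolding q_def using div_ge_iff[OF D0] by (simp add: mult.assoc)
    have bn: "b \<le> n" using b by simp
    have bmod: "b mod D = b - (10*j + d)*D" using q unfolding q_def by (metis minus_div_mult_eq_mod)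
    have "g b = real_of_int (j * D + (b - (10*j + d)*D + 1) - T) / real_of_int (b + 1 - 10*T)"
      using g[OF bT bn] qm bmod unfolding q_def by simp
    also have "\<dots> = real_of_int (b - ((9*j + d)*D + T - 1)) / real_of_int (b + 1 - 10*T)"
      by (simp add: algebra_simps)
    finally show "b \<in> SB \<and> b div D div 10 = j \<and>
      real_of_int (b - ((9*j + d)*D + T - 1)) / real_of_int (b + 1 - 10*T) = g b"
      using bT bn qm unfolding SB_def q_def by simp
  next
    fix m assume m: "m \<in> SB"
    define q where "q = m div D"
    define j where "j = q div 10"
    have mn: "m \<le> n" "10*T*D \<le> m" "q mod 10 = d" using m unfolding SB_def q_def by auto
    have qq: "q = 10*j + d" using mn(3) unfolding j_def by (metis div_mult_mod_eq mult.commute)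
    have "10*T \<le> q" unfolding q_def using div_ge_iff[OF D0] mn(2) by (simp add: mult.assoc)
    moreover have "q \<le> qn" using qmono[OF mn(1)] q_def by simp
    ultimately have jr: "j \<in> {T..l}" using Q2 qq d0 d9 by simp
    have "(10*j + d)*D \<le> m" using qq q_def div_ge_iff[OF D0, of "10*j + d" m] by simp
    moreover have "m < (10*j + (d+1))*D" using qq q_def div_lt_iff[OF D0, of m "10*j + (d+1)"] by simp
    ultimately have "j \<in> {T..l} \<and> m \<in> {(10*j + d)*D .. min n ((10*j + (d+1))*D - 1)}"
      using jr mn(1) by simp
    then show "m div D div 10 \<in> {T..l} \<and> m \<in> {(10*(m div D div 10) + d)*D .. min n ((10*(m div D div 10) + (d+1))*D - 1)}"
      unfolding j_def q_def .
  qed auto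
  have Asum: "(\<Sum>j\<in>{T - 1..l}. \<Sum>a\<in>{max (10*T*D) ((10*j + (d+1))*D) .. min n ((10*(j+1) + d)*D - 1)}.
        real_of_int (D*(j+1) - T) / real_of_int (a + 1 - 10*T)) = (\<Sum>m\<in>SA. g m)"
  proof (rule regroup[where \<pi> = "\<lambda>m. (m div D - d - 1) div 10"])
    fix j a assume j: "j \<in> {T - 1..l}" and a: "a \<in> {max (10*T*D) ((10*j + (d+1))*D) .. min n ((10*(j+1) + d)*D - 1)}"
    define q where "q = a div D"
    define c where "c = q mod 10"
    define w where "w = q div 10"
    have qcw: "q = 10*w + c" "0 \<le> c" "c < 10" unfolding c_def w_def by auto
    have "10*j + (d+1) \<le> q" unfolding q_def using div_ge_iff[OF D0, of "10*j + (d+1)" a] a by auto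
    moreover have "q < 10*(j+1) + d" unfolding q_def using div_lt_iff[OF D0, of a "10*(j+1) + d"] a by auto
    ultimately have qb: "10*j + (d+1) \<le> q" "q < 10*(j+1) + d" by auto
    have cd: "c \<noteq> d" by (rule t2[OF qb qcw d0 d9])
    have "10*j \<le> q - d - 1" "q - d - 1 < 10*j + 10" using qb unfolding distrib_left by linarith+
    then have pj: "(q - d - 1) div 10 = j" by (rule div10_eq)
    have wv: "w * D + (if d < c then D else if c = d then a mod D + 1 else 0) = D*(j+1)"
    proof (cases "d < c")
      case True
      then have "w = j" by (rule t4[OF qb qcw d0 d9])
      then show ?thesis using True by (simp add: algebra_simps)
    next
      case False
      then have "c < d" using cd by linarith
      then have "w = j + 1" by (rule t5[OF qb qcw d0 d9])
      then show ?thesis using False cd by (simp add: algebra_simps)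
    qed
    have aT: "10*T*D \<le> a" "a \<le> n" using a by auto
    have "g a = real_of_int (D*(j+1) - T) / real_of_int (a + 1 - 10*T)"
      using g[OF aT] wv unfolding q_def c_def w_def by simp
    then show "a \<in> SA \<and> (a div D - d - 1) div 10 = j \<and>
      real_of_int (D*(j+1) - T) / real_of_int (a + 1 - 10*T) = g a"
      using aT cd pj unfolding SA_def q_def c_def by simp
  next
    fix m assume m: "m \<in> SA"
    define q where "q = m div D"
    define j where "j = (q - d - 1) div 10"
    have mn: "m \<le> n" "10*T*D \<le> m" "q mod 10 \<noteq> d" using m unfolding SA_def q_def by auto
    have "10*T \<le> q" unfolding q_def using div_ge_iff[OF D0] mn(2) by (simp add: mult.assoc)
    moreover have "q \<le> qn" using qmono[OF mn(1)] q_def by simp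
    moreover define r where "r = (q - d - 1) mod 10"
    moreover have ur: "q - d - 1 = 10*j + r" "0 \<le> r" "r < 10" unfolding j_def r_def using dec10[of "q - d - 1"] by auto
    ultimately have h1: "10*(T - 2) < 10*j" "10*j < 10*(l+1)" using Q2 d0 d9 unfolding distrib_left right_diff_distrib by linarith+
    have "T - 2 < j" "j < l + 1" using ten_lt[OF h1(1)] ten_lt[OF h1(2)] by auto
    then have jr: "j \<in> {T - 1..l}" by simp
    have "r \<noteq> 9"
    proof
      assume "r = 9"
      then have "q = 10*(j+1) + d" using ur by simp
      then have "q mod 10 = d" using dm10[OF d0 d9] by blast
      then show False using mn(3) by simp
    qed
    then have "r < 9" using ur by simp
    then have qb: "10*j + (d+1) \<le> q" "q < 10*(j+1) + d" using ur unfolding distrib_left by linarith+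
    have "(10*j + (d+1))*D \<le> m" using qb q_def div_ge_iff[OF D0, of "10*j + (d+1)" m] by simp
    moreover have "m < (10*(j+1) + d)*D" using qb q_def div_lt_iff[OF D0, of m "10*(j+1) + d"] by simp
    ultimately have "j \<in> {T - 1..l} \<and> m \<in> {max (10*T*D) ((10*j + (d+1))*D) .. min n ((10*(j+1) + d)*D - 1)}"
      using jr mn(1,2) by simp
    then show "(m div D - d - 1) div 10 \<in> {T - 1..l} \<and> m \<in> {max (10*T*D) ((10*((m div D - d - 1) div 10) + (d+1))*D) .. min n ((10*((m div D - d - 1) div 10 + 1) + d)*D - 1)}"
      unfolding j_def q_def .
  qed auto
  have split: "(\<Sum>m\<in>{10*T*D..n}. g m) = (\<Sum>m\<in>SB. g m) + (\<Sum>m\<in>SA. g m)"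
  proof -
    have "{10*T*D..n} = SB \<union> SA" unfolding SB_def SA_def by auto
    moreover have "SB \<inter> SA = {}" unfolding SB_def SA_def by auto
    moreover have "finite SB" "finite SA" unfolding SB_def SA_def by (rule finite_subset[of _ "{10*T*D..n}"]; auto)+
    ultimately show ?thesis by (simp add: sum.union_disjoint)
  qed
  have qnD: "qn * D \<le> n" "n < (qn + 1) * D"
    using div_ge_iff[OF D0, of qn n] div_lt_iff[OF D0, of n "qn+1"] qn_def by auto
  show ?thesis
  proof (cases "n div D mod 10 = d")
    case True
    then have "qn mod 10 = d" using qn_def by simp
    then have qw: "qn = 10*(qn div 10) + d" using dec10(1)[of qn] by simp
    have "10*l \<le> 10*(qn div 10)" "10*(qn div 10) < 10*(l+1)" using qw Q1 Q2 unfolding distrib_left by linarith+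
    then have "l \<le> qn div 10" "qn div 10 < l + 1" using ten_lt by auto
    then have "qn div 10 = l" by simp
    then have qe: "qn = 10*l + d" using qw by simp
    have "10*T < 10*(l+2)" using Q0 Q2 d9 unfolding distrib_left by linarith
    then have lT: "T - 1 \<le> l" using ten_lt by fastforce
    have ins: "{T - 1..l} = insert l {T - 1..l - 1}" using lT by auto
    have empty: "{max (10*T*D) ((10*l + (d+1))*D) .. min n ((10*(l+1) + d)*D - 1)} = {}"
    proof -
      have "n < (10*l + (d+1))*D" using qnD(2) qe by (simp add: add.assoc)
      then show ?thesis by auto
    qed
    have mins: "min n ((10*(j+1) + d)*D - 1) = (10*(j+1) + d)*D - 1" if "j \<in> {T - 1..l - 1}" for j
    proof -
      have "10*(j+1) + d \<le> 10*l + d" using that by auto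
      then have "(10*(j+1) + d)*D \<le> (10*l + d)*D" using D0 by (simp add: mult_right_mono)
      then show ?thesis using F1 by auto
    qed
    have "(\<Sum>j\<in>{T - 1..l}. \<Sum>a\<in>{max (10*T*D) ((10*j + (d+1))*D) .. min n ((10*(j+1) + d)*D - 1)}.
        real_of_int (D*(j+1) - T) / real_of_int (a + 1 - 10*T))
      = (\<Sum>j\<in>{T - 1..l - 1}. \<Sum>a\<in>{max (10*T*D) ((10*j + (d+1))*D) .. (10*(j+1) + d)*D - 1}.
        real_of_int (D*(j+1) - T) / real_of_int (a + 1 - 10*T))"
      unfolding ins using empty mins by (simp add: sum.insert)
    then show ?thesis using True split Bsum Asum by simp
  next
    case False
    then have "qn mod 10 \<noteq> d" using qn_def by simp
    then have "qn \<noteq> 10*l + d" using dm10[OF d0 d9, of qn l] by blast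
    then have "10*l + d < qn" using Q1 by simp
    then have qe: "10*l + d + 1 \<le> qn" by simp
    have mins: "min n ((10*j + (d+1))*D - 1) = (10*j + (d+1))*D - 1" if "j \<in> {T..l}" for j
    proof -
      have "10*j + (d+1) \<le> qn" using that qe by auto
      then have "(10*j + (d+1))*D \<le> qn*D" using D0 by (simp add: mult_right_mono)
      then show ?thesis using qnD by auto
    qed
    have "(\<Sum>j\<in>{T..l}. \<Sum>b\<in>{(10*j + d)*D .. min n ((10*j + (d+1))*D - 1)}.
        real_of_int (b - ((9*j + d)*D + T - 1)) / real_of_int (b + 1 - 10*T))
      = (\<Sum>j\<in>{T..l}. \<Sum>b\<in>{(10*j + d)*D .. (10*j + (d+1))*D - 1}.
        real_of_int (b - ((9*j + d)*D + T - 1)) / real_of_int (b + 1 - 10*T))"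
      using mins by (intro sum.cong) auto
    then show ?thesis using False split Bsum Asum by simp
  qed
qed

theorem proposition4:
  fixes p d n :: nat and k :: int
  assumes "p \<ge> 2" and "d \<le> 9" and "n \<ge> 10 ^ (p - 1)"
    and "k = (if \<exists>i::nat. 10 ^ (i + p) \<le> n
              then int (GREATEST i::nat. 10 ^ (i + p) \<le> n) else -1)"
  shows
    "let e = nat (k + 1);
         l = (int n - (10 ^ (p - 1) + int d) * 10 ^ e) div 10 ^ (e + 1) + 10 ^ (p - 2);
         r = (if pth_digit p n = d then
                (\<Sum>j\<in>{10 ^ (p - 2)..l}.
                   \<Sum>b\<in>{(10 * j + int d) * 10 ^ e .. min (int n) ((10 * j + (int d + 1)) * 10 ^ e - 1)}.
                     real_of_int (b - ((9 * j + int d) * 10 ^ e + 10 ^ (p - 2) - 1))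
                       / real_of_int (b + 1 - 10 ^ (p - 1)))
              + (\<Sum>j\<in>{10 ^ (p - 2) - 1..l - 1}.
                   \<Sum>a\<in>{max (10 ^ (p - 1 + e)) ((10 * j + (int d + 1)) * 10 ^ e) .. (10 * (j + 1) + int d) * 10 ^ e - 1}.
                     real_of_int (10 ^ e * (j + 1) - 10 ^ (p - 2))
                       / real_of_int (a + 1 - 10 ^ (p - 1)))
              else
                (\<Sum>j\<in>{10 ^ (p - 2)..l}.
                   \<Sum>b\<in>{(10 * j + int d) * 10 ^ e .. (10 * j + (int d + 1)) * 10 ^ e - 1}.
                     real_of_int (b - ((9 * j + int d) * 10 ^ e + 10 ^ (p - 2) - 1))
                       / real_of_int (b + 1 - 10 ^ (p - 1)))
              + (\<Sum>j\<in>{10 ^ (p - 2) - 1..l}.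
                   \<Sum>a\<in>{max (10 ^ (p - 1 + e)) ((10 * j + (int d + 1)) * 10 ^ e) .. min (int n) ((10 * (j + 1) + int d) * 10 ^ e - 1)}.
                     real_of_int (10 ^ e * (j + 1) - 10 ^ (p - 2))
                       / real_of_int (a + 1 - 10 ^ (p - 1))));
         prod = (if k = -1 then 0
                 else Pprob d (10 ^ nat (k + int p) - 1) p * (10 ^ nat (k + int p) - 10 ^ (p - 1)))
     in Pprob d n p = (1 / (real n + 1 - 10 ^ (p - 1))) * (prod + r)"
  proof -
  define e where "e = nat (k + 1)"
  have p1: "1 \<le> p" using assms(1) by simp
  have rng: "10^(p-1+e) \<le> n \<and> n < 10^(p+e) \<and>
     (if k = -1 then 0 else Pprob d (10 ^ nat (k + int p) - 1) p * (10 ^ nat (k + int p) - 10 ^ (p - 1)))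
       = (\<Sum>m\<in>{10^(p-1)..10^(p-1+e) - 1}. real (Ncount p d m) / (real m + 1 - 10 ^ (p - 1)))"
  proof (cases "\<exists>i::nat. 10 ^ (i + p) \<le> n")
    case True
    define G where "G = (GREATEST i::nat. 10 ^ (i + p) \<le> n)"
    have bnd: "\<forall>i. 10 ^ (i + p) \<le> n \<longrightarrow> i \<le> n"
    proof (intro allI impI)
      fix i assume "10 ^ (i + p) \<le> n"
      moreover have "i < (10::nat)^i" by (induction i) auto
      moreover have "(10::nat)^i \<le> 10^(i+p)" by (rule power_increasing) auto
      ultimately show "i \<le> n" by linarith
    qed
    obtain i where i: "10 ^ (i + p) \<le> n" using True by blast
    have G1: "10 ^ (G + p) \<le> n" unfolding G_def using GreatestI_nat[of "\<lambda>i. 10 ^ (i + p) \<le> n", OF i] bnd by blast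
    have G2: "\<not> 10 ^ (Suc G + p) \<le> n"
    proof
      assume "10 ^ (Suc G + p) \<le> n"
      then have "Suc G \<le> G" unfolding G_def using Greatest_le_nat[of "\<lambda>i. 10 ^ (i + p) \<le> n"] bnd by blast
      then show False by simp
    qed
    have kG: "k = int G" using assms(4) True G_def by simp
    have eG: "e = Suc G" unfolding e_def kG by simp
    have pe: "p - 1 + e = G + p" "p + e = Suc G + p" using p1 eG by auto
    have kn: "k \<noteq> -1" "nat (k + int p) = p - 1 + e" using kG pe by auto
    define M where "M = (10::nat)^(p-1+e)"
    have hM1: "(10::nat)^(p-1+e) = 10*10^(p-1+G)" using eG by simp
    have hM2: "(10::nat)^(p-1) \<le> 10^(p-1+G)" by (rule power_increasing) auto
    have hML: "10 * 10^(p-1) \<le> M" unfolding M_def hM1 using hM2 by simp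
    have Mpos: "1 \<le> M" unfolding M_def by simp
    have "real (10 * 10^(p-1)) \<le> real M" using hML by (rule of_nat_mono)
    then have "10 * 10^(p-1) \<le> real M" by simp
    moreover have "(0::real) < 10^(p-1)" by simp
    ultimately have MLr: "real M - 10^(p-1) \<noteq> 0" by linarith
    have "Pprob d (M - 1) p * (real M - 10 ^ (p - 1)) =
         (\<Sum>m\<in>{10^(p-1)..M - 1}. real (Ncount p d m) / (real m + 1 - 10 ^ (p - 1)))"
      unfolding Pprob_def using Mpos MLr by (simp add: of_nat_diff)
    then show ?thesis using G1 G2 pe kn unfolding M_def by (simp add: add.commute[of G p])
  next
    case False
    have k: "k = -1" using assms(4) False by simp
    have e0: "e = 0" unfolding e_def k by simp
    have "n < 10^p" using False by (metis add_0 not_le)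
    moreover have "{10^(p-1)..10^(p-1) - 1 :: nat} = {}" by (simp add: Suc_le_eq)
    ultimately show ?thesis using assms(3) k e0 by simp
  qed
  define M where "M = (10::nat)^(p-1+e)"
  define f where "f = (\<lambda>m::nat. real (Ncount p d m) / (real m + 1 - 10 ^ (p - 1)))"
  have Mn: "M \<le> n" "n < 10^(p+e)" using rng unfolding M_def by auto
  have Mpos: "1 \<le> M" unfolding M_def by simp
  have LM: "10^(p-1) \<le> M" unfolding M_def by (rule power_increasing) auto
  have spl: "(\<Sum>m\<in>{10^(p-1)..n}. f m) = (\<Sum>m\<in>{10^(p-1)..M - 1}. f m) + (\<Sum>m\<in>{M..n}. f m)"
  proof -
    have "{10^(p-1)..n} = {10^(p-1)..M - 1} \<union> {M..n}" using Mpos LM Mn by auto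
    moreover have "{10^(p-1)..M - 1} \<inter> {M..n} = {}" using Mpos by auto
    ultimately show ?thesis by (simp add: sum.union_disjoint)
  qed
  have P: "Pprob d n p = (1 / (real n + 1 - 10 ^ (p - 1))) *
      ((\<Sum>m\<in>{10^(p-1)..M - 1}. f m) + (\<Sum>m\<in>{M..n}. f m))"
    unfolding Pprob_def using spl unfolding f_def by simp
  have toint: "(\<Sum>m\<in>{M..n}. f m) = (\<Sum>m\<in>{int M..int n}. f (nat m))"
    by (rule sum.reindex_bij_witness[of _ nat int]) auto
  have Tn: "(10::nat)^(p-1) = 10 * 10^(p-2)" "(10::nat)^p = 10*10*10^(p-2)" using T_facts[OF assms(1)] by auto
  have Lp: "(10::int)^(p-1) = 10*10^(p-2)"
  proof -
    have "int (10^(p-1)) = int (10 * 10^(p-2))" using Tn(1) by simp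
    then show ?thesis by simp
  qed
  have Lpr: "(10::real)^(p-1) = 10*10^(p-2)"
  proof -
    have "real (10^(p-1)) = real (10 * 10^(p-2))" using Tn(1) by simp
    then show ?thesis by simp
  qed
  have Me: "(10::int)^(p-1+e) = 10*10^(p-2)*10^e" using Lp by (simp add: power_add)
  have Ee: "(10::int)^(e+1) = 10*10^e" by simp
  have intM: "int M = 10*10^(p-2)*10^e" unfolding M_def using Me by simp
  have gh: "f (nat m) = real_of_int ((m div 10^e div 10) * 10^e +
       (if int d < m div 10^e mod 10 then 10^e else if m div 10^e mod 10 = int d then m mod 10^e + 1 else 0) - 10^(p-2))
       / real_of_int (m + 1 - 10*10^(p-2))"
    if m1: "10*10^(p-2)*10^e \<le> m" and m2: "m \<le> int n" for m
  proof -
    define x where "x = nat m"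
    have mx: "m = int x" unfolding x_def using m1 by (simp add: order.trans[OF _ m1])
    have "int (10^(p-1)*10^e) = 10*10^(p-2)*10^e" using Me by (simp add: power_add[symmetric])
    then have "int (10^(p-1)*10^e) \<le> int x" using m1 unfolding mx by simp
    then have x1: "10^(p-1)*10^e \<le> x" by (simp only: of_nat_le_iff)
    have x2: "x < 10^p*10^e" using m2 Mn(2) unfolding mx by (simp add: power_add)
    have NF: "Ncount p d x + 10^(p-2) = Phi (10^e) d x" by (rule Ncount_formula[OF assms(1,2) x1 x2])
    have "int (Ncount p d x) = int (Phi (10^e) d x) - 10^(p-2)" 
    proof -
      have "int (Ncount p d x + 10^(p-2)) = int (Phi (10^e) d x)" using NF by simp
      then show ?thesis by simp
    qed
    then have "real (Ncount p d x) = real_of_int (int (Phi (10^e) d x) - 10^(p-2))" by (metis of_int_of_nat_eq)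
    moreover have "real x + 1 - 10^(p-1) = real_of_int (m + 1 - 10*10^(p-2))" unfolding mx Lpr by simp
    ultimately show ?thesis unfolding f_def x_def[symmetric] mx Phi_int by simp
  qed
  have c1: "(1::int) \<le> 10^(p-2)" "(1::int) \<le> 10^e" "0 \<le> int d" "int d \<le> 9" using assms(2) by auto
  have c2: "10*10^(p-2)*10^e \<le> int n" using Mn(1) intM by linarith
  note C = core[of "10^(p-2)" "10^e" "int d" "int n" "(int n - (10 * 10^(p-2) + int d) * 10^e) div (10 * 10^e) + 10^(p-2)"
     "\<lambda>m. f (nat m)", OF c1 c2 refl gh]
  have pd: "(pth_digit p n = d) = (int n div 10^e mod 10 = int d)"
  proof -
    have "pth_digit p n = n div 10^e mod 10" by (rule pth_digit_eq) (use p1 rng in auto)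
    moreover have "int (n div 10^e mod 10) = int n div 10^e mod 10" by (simp add: zdiv_int zmod_int)
    moreover have "(n div 10^e mod 10 = d) = (int (n div 10^e mod 10) = int d)" by (simp only: of_nat_eq_iff)
    ultimately show ?thesis by simp
  qed
  have prodeq: "(if k = -1 then 0 else Pprob d (10 ^ nat (k + int p) - 1) p * (10 ^ nat (k + int p) - 10 ^ (p - 1)))
     = (\<Sum>m\<in>{10^(p-1)..M - 1}. f m)" using rng unfolding M_def f_def by simp
  note R = trans[OF toint[unfolded intM] C]
  show ?thesis unfolding Let_def e_def[symmetric] Me Ee Lp pd prodeq
    apply (subst P, subst R)
      apply assumption
     apply assumption
    apply (rule refl)
    done


qed

end
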